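(* Let $n\ge 1$ and let $S=\{w_1,\dots,w_s\}\subset\mathbb{C}^n$ be a unitary 2-design. Then \[ \mathrm{MM}_n = \mathbf{1}\otimes\mathbf{1}\otimes\mathbf{1} + \frac{n^3}{s^3}\sum_{\substack{i,j,k\in\{1,\dots,s\}\\ \text{pairwise distinct}}} |w_i\rangle\langle w_j - w_i| \otimes |w_j\rangle\langle w_k - w_j| \otimes |w_k\rangle\langle w_i - w_k| . \]
   Context: For $u, v \in \mathbb{C}^n$, $|u\rangle\langle v|$ denotes the $n\times n$ matrix whose $(i,j)$ entry is $u_i \overline{v_j}$. Let $e_1,\dots,e_n$ be the standard basis of $\mathbb{C}^n$ and $E_{ab} = |e_a\rangle\langle e_b|$. The matrix multiplication tensor is $\mathrm{MM}_n = \sum_{a,b,c=1}^n E_{ab}\otimes E_{bc}\otimes E_{ca} \in \mathbb{C}^{n\times n}\otimes\mathbb{C}^{n\times n}\otimes\mathbb{C}^{n\times n}$; $\mathbf{1}$ is the $n\times n$ identity matrix. A finite set $S = \{w_1,\dots,w_s\} \subset \mathbb{C}^n$ is a unitary 2-design if $\sum_{i=1}^s w_i = 0$ and $\frac{1}{s}\sum_{i=1}^s |w_i\rangle\langle w_i| = \frac{1}{n}\mathbf{1}$. *)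

theory Defs
  imports "HOL-Analysis.Analysis"
begin

text \<open>Vectors in C^n are modelled as complex^'n for a finite index type 'n
  (so n = CARD('n) >= 1); n x n matrices as complex^'n^'n.\<close>

definition ketbra :: "complex^'n \<Rightarrow> complex^'n \<Rightarrow> complex^'n^'n" where
  "ketbra u v = (\<chi> i j. u$i * cnj (v$j))"

definition Eab :: "'n::finite \<Rightarrow> 'n \<Rightarrow> complex^'n^'n" where
  "Eab a b = ketbra (axis a 1) (axis b 1)"

text \<open>Elements of C^{nxn} (x) C^{nxn} (x) C^{nxn} are represented by their
  coordinate functions; the tensor product of three matrices is the pure tensor.\<close>

type_synonym 'n tensor3 = "('n \<times> 'n) \<Rightarrow> ('n \<times> 'n) \<Rightarrow> ('n \<times> 'n) \<Rightarrow> complex"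

definition tensor3 :: "complex^'n^'n \<Rightarrow> complex^'n^'n \<Rightarrow> complex^'n^'n \<Rightarrow> 'n tensor3" where
  "tensor3 A B C = (\<lambda>(a,b) (c,d) (e,f). A$a$b * B$c$d * C$e$f)"

definition MM :: "('n::finite) tensor3" where
  "MM = (\<lambda>p q r. \<Sum>a\<in>UNIV. \<Sum>b\<in>UNIV. \<Sum>c\<in>UNIV. tensor3 (Eab a b) (Eab b c) (Eab c a) p q r)"

definition unitary_2_design :: "(complex^'n::finite) set \<Rightarrow> bool" where
  "unitary_2_design S \<longleftrightarrow> finite S \<and> (\<Sum>w\<in>S. w) = 0 \<and>
     (1 / real (card S)) *\<^sub>R (\<Sum>w\<in>S. ketbra w w) = (1 / real CARD('n)) *\<^sub>R mat 1"

end

theory Submission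
  imports Defs
begin

lemma triple:
  "(\<Sum>u\<in>S. \<Sum>v\<in>S. \<Sum>x\<in>S. (f u::complex) * g v * h x) = sum f S * sum g S * sum h S"
proof -
  have "(\<Sum>u\<in>S. \<Sum>v\<in>S. \<Sum>x\<in>S. f u * g v * h x) = (\<Sum>u\<in>S. \<Sum>v\<in>S. f u * g v * sum h S)"
    by (intro sum.cong refl) (simp add: sum_distrib_left)
  also have "\<dots> = (\<Sum>u\<in>S. f u * sum g S * sum h S)"
    by (intro sum.cong refl) (simp add: sum_distrib_left sum_distrib_right, rule sum.swap)
  also have "\<dots> = sum f S * sum g S * sum h S"
    by (simp add: sum_distrib_right)
  finally show ?thesis .
qed

lemma expand:
  fixes A B C D E F :: "'v \<Rightarrow> complex"
  assumes "sum A S = 0" "sum C S = 0" "sum E S = 0"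
  shows "(\<Sum>u\<in>S. \<Sum>v\<in>S. \<Sum>x\<in>S. A u * (B v - B u) * C v * (D x - D v) * E x * (F u - F x)) =
    sum (\<lambda>u. A u * F u) S * sum (\<lambda>v. C v * B v) S * sum (\<lambda>x. E x * D x) S
  - sum (\<lambda>u. A u * B u) S * sum (\<lambda>v. C v * D v) S * sum (\<lambda>x. E x * F x) S"
proof -
  have e: "\<And>u v x. A u * (B v - B u) * C v * (D x - D v) * E x * (F u - F x) =
     (A u * F u) * (C v * B v) * (E x * D x)
   - (A u) * (C v * B v) * (E x * D x * F x)
   - (A u * F u) * (C v * B v * D v) * (E x)
   + (A u) * (C v * B v * D v) * (E x * F x)
   - (A u * B u * F u) * (C v) * (E x * D x)
   + (A u * B u) * (C v) * (E x * D x * F x)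
   + (A u * B u * F u) * (C v * D v) * (E x)
   - (A u * B u) * (C v * D v) * (E x * F x)"
    by (simp add: algebra_simps)
  show ?thesis
    unfolding e by (simp only: sum.distrib sum_subtractf triple assms) simp
qed

lemma Eab_nth: "Eab x y $ i $ j = (if i = x \<and> j = y then 1 else 0)"
  by (simp add: Eab_def ketbra_def axis_def)

lemma MM_val: "MM (a,b) (c,d) (e,f) = (if a = f \<and> b = c \<and> d = e then 1 else 0)"
proof -
  have "\<And>x y z. Eab x y $ a $ b * Eab y z $ c $ d * Eab z x $ e $ f =
     (if z = d then (if y = b then (if x = a then (if a = f \<and> b = c \<and> d = e then 1 else 0) else 0) else 0) else 0)"
    by (auto simp: Eab_nth)
  then show ?thesis unfolding MM_def tensor3_def by simp
qed

theorem mainTheorem2: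
  fixes S :: "(complex^'n::finite) set"
  assumes "unitary_2_design S"
  shows "MM = (\<lambda>p q r. tensor3 (mat 1) (mat 1) (mat 1) p q r
            + complex_of_real (real CARD('n) ^ 3 / real (card S) ^ 3) *
              (\<Sum>(u,v,x)\<in>{(u,v,x). u \<in> S \<and> v \<in> S \<and> x \<in> S \<and> u \<noteq> v \<and> v \<noteq> x \<and> u \<noteq> x}.
                 tensor3 (ketbra u (v - u)) (ketbra v (x - v)) (ketbra x (u - x)) p q r))"
proof -
  have fin: "finite S" and s0: "(\<Sum>w\<in>S. w) = 0"
    and des: "(1 / real (card S)) *\<^sub>R (\<Sum>w\<in>S. ketbra w w) = (1 / real CARD('n)) *\<^sub>R (mat 1 :: complex^'n^'n)"
    using assms unfolding unitary_2_design_def by auto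
  define s where "s = real (card S)"
  define n where "n = real CARD('n)"
  have npos: "n > 0" unfolding n_def by simp
  have spos: "s > 0"
  proof (rule ccontr)
    assume "\<not> s > 0"
    then have "s = 0" unfolding s_def by simp
    then have "(mat 1 :: complex^'n^'n) = 0" using des npos unfolding s_def[symmetric] n_def[symmetric] by simp
    then have "(mat 1 :: complex^'n^'n) $ undefined $ undefined = 0" by simp
    then show False by (simp add: mat_def)
  qed
  have D0: "\<And>a. (\<Sum>w\<in>S. w $ a) = 0"
  proof -
    fix a
    have "(\<Sum>w\<in>S. w) $ a = 0" using s0 by simp
    then show "(\<Sum>w\<in>S. w $ a) = 0" by simp
  qed
  have D1: "\<And>a b. (\<Sum>w\<in>S. w $ a * cnj (w $ b)) = complex_of_real (s / n) * (if a = b then 1 else 0)"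
  proof -
    fix a b
    have "((1 / s) *\<^sub>R (\<Sum>w\<in>S. ketbra w w)) $ a $ b = ((1 / n) *\<^sub>R (mat 1 :: complex^'n^'n)) $ a $ b"
      using des unfolding s_def n_def by simp
    then have "(1 / s) *\<^sub>R (\<Sum>w\<in>S. w $ a * cnj (w $ b)) = (1 / n) *\<^sub>R (if a = b then 1 else 0)"
      by (simp add: ketbra_def mat_def)
    then show "?thesis a b" using spos npos
      by (auto simp: scaleR_conv_of_real field_simps)
  qed
  let ?T = "{(u,v,x). u \<in> S \<and> v \<in> S \<and> x \<in> S \<and> u \<noteq> v \<and> v \<noteq> x \<and> u \<noteq> x}"
  show ?thesis
  proof (intro ext)
    fix p q r :: "'n \<times> 'n"
    obtain a b where p: "p = (a,b)" by fastforce
    obtain c d where q: "q = (c,d)" by fastforce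
    obtain e f where r: "r = (e,f)" by fastforce
    define G where "G = (\<lambda>u v x. tensor3 (ketbra u (v - u)) (ketbra v (x - v)) (ketbra x (u - x)) p q r)"
    have Gv: "G u v x = u$a * (cnj (v$b) - cnj (u$b)) * v$c * (cnj (x$d) - cnj (v$d)) * x$e * (cnj (u$f) - cnj (x$f))" for u v x
      unfolding G_def p q r tensor3_def ketbra_def by (simp add: mult.assoc)
    have "(\<Sum>(u,v,x)\<in>?T. G u v x) = (\<Sum>(u,v,x)\<in>S \<times> S \<times> S. G u v x)"
      by (rule sum.mono_neutral_left) (auto simp: fin Gv)
    also have "\<dots> = (\<Sum>u\<in>S. \<Sum>v\<in>S. \<Sum>x\<in>S. G u v x)"
      by (simp add: sum.cartesian_product)
    also have "\<dots> = (\<Sum>u\<in>S. u$a * cnj (u$f)) * (\<Sum>v\<in>S. v$c * cnj (v$b)) * (\<Sum>x\<in>S. x$e * cnj (x$d))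
       - (\<Sum>u\<in>S. u$a * cnj (u$b)) * (\<Sum>v\<in>S. v$c * cnj (v$d)) * (\<Sum>x\<in>S. x$e * cnj (x$f))"
      unfolding Gv by (rule expand[where A="\<lambda>u. u$a" and C = "\<lambda>u. u$c" and E = "\<lambda>u. u$e"]) (simp_all add: D0)
    also have "\<dots> = complex_of_real (s/n)^3 * ((if a = f \<and> b = c \<and> d = e then 1 else 0) - (if a = b \<and> c = d \<and> e = f then 1 else 0))"
      unfolding D1 by (cases "a=f"; cases "b=c"; cases "d=e"; cases "a=b"; cases "c=d"; cases "e=f"; simp add: power3_eq_cube)
    finally have eq: "(\<Sum>(u,v,x)\<in>?T. G u v x) = \<dots>" .
    have K: "complex_of_real (n ^ 3 / s ^ 3) * complex_of_real (s/n)^3 = 1"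
      using spos npos by (simp add: power_divide flip: of_real_power of_real_mult)
    have t1: "tensor3 (mat 1) (mat 1) (mat 1) p q r = (if a = b \<and> c = d \<and> e = f then 1 else (0::complex))"
      by (simp add: p q r tensor3_def mat_def)
    have sumeq: "(\<Sum>(u,v,x)\<in>?T. tensor3 (ketbra u (v - u)) (ketbra v (x - v)) (ketbra x (u - x)) p q r)
        = (\<Sum>(u,v,x)\<in>?T. G u v x)" unfolding G_def ..
    have mm: "MM p q r = (if a = f \<and> b = c \<and> d = e then 1 else 0)"
      unfolding p q r by (rule MM_val)
    have "tensor3 (mat 1) (mat 1) (mat 1) p q r
            + complex_of_real (real CARD('n) ^ 3 / real (card S) ^ 3) *
              (\<Sum>(u,v,x)\<in>?T. tensor3 (ketbra u (v - u)) (ketbra v (x - v)) (ketbra x (u - x)) p q r)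
        = (if a = b \<and> c = d \<and> e = f then 1 else 0) + (complex_of_real (n ^ 3 / s ^ 3) * complex_of_real (s/n)^3) *
           ((if a = f \<and> b = c \<and> d = e then 1 else 0) - (if a = b \<and> c = d \<and> e = f then 1 else 0))"
      unfolding sumeq eq t1 s_def n_def by (simp only: mult.assoc)
    also have "\<dots> = MM p q r" unfolding K mm by simp
    finally show "MM p q r = tensor3 (mat 1) (mat 1) (mat 1) p q r
            + complex_of_real (real CARD('n) ^ 3 / real (card S) ^ 3) *
              (\<Sum>(u,v,x)\<in>?T. tensor3 (ketbra u (v - u)) (ketbra v (x - v)) (ketbra x (u - x)) p q r)"
      by simp
  qed
qed

end
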